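(* Let $c$ and $n$ be odd positive integers with $n>c>\frac{n}{2}$, and let $K$ be the set partition of $S_c$ whose only part with more than one element is the set of cyclic shifts of the identity of $S_c$. Then $$|{}^nH_n^{even}|-|{}^nH_n^{odd}| = |{}^nN_n^{odd}|-|{}^nN_n^{even}|.$$
   Context: Permutations are written in one-line notation. The order permutation (standardization) of a word $u$ of distinct positive integers of length $\ell$ is the unique $\pi\in S_\ell$ with $\pi_i<\pi_j$ iff $u_i<u_j$. A hit in a permutation is a contiguous subword of length $c$ whose order permutation is a cyclic shift of $12\cdots c$ (one of $12\cdots c,\ 23\cdots c1,\ldots,c12\cdots(c-1)$); a hit "starts at" the position of its first letter. A non-avoider is a permutation with at least one hit. A hit-hugger in $S_n$ is a permutation with exactly two hits, one starting at position $1$ and one starting at position $n-c+1$. $N_n$ and $H_n$ denote the sets of non-avoiders and hit-huggers in $S_n$; a superscript "even"/"odd" on the right restricts to permutations of that sign, and a superscript $n$ on the left restricts to permutations whose last letter is $n$. *)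

theory Defs
  imports "HOL-Combinatorics.Permutations"
begin

definition is_order_perm :: "nat \<Rightarrow> (nat \<Rightarrow> nat) \<Rightarrow> (nat \<Rightarrow> nat) \<Rightarrow> bool" where
  "is_order_perm l u pi \<longleftrightarrow>
     (\<forall>j<l. pi j \<in> {1..l}) \<and> inj_on pi {..<l} \<and>
     (\<forall>j<l. \<forall>k<l. pi j < pi k \<longleftrightarrow> u j < u k)"

text \<open>The k-th cyclic shift of the identity 12...c (k < c): (k+1)(k+2)...c 1 ... k.\<close>
definition cyc_shift :: "nat \<Rightarrow> nat \<Rightarrow> nat \<Rightarrow> nat" where
  "cyc_shift c k j = (j + k) mod c + 1"

definition hit_at :: "nat \<Rightarrow> nat \<Rightarrow> (nat \<Rightarrow> nat) \<Rightarrow> nat \<Rightarrow> bool" where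
  "hit_at n c p i \<longleftrightarrow> 1 \<le> i \<and> i + c \<le> n + 1 \<and>
     (\<exists>k<c. is_order_perm c (\<lambda>j. p (i + j)) (cyc_shift c k))"

definition hits :: "nat \<Rightarrow> nat \<Rightarrow> (nat \<Rightarrow> nat) \<Rightarrow> nat set" where
  "hits n c p = {i. hit_at n c p i}"

definition non_avoider :: "nat \<Rightarrow> nat \<Rightarrow> (nat \<Rightarrow> nat) \<Rightarrow> bool" where
  "non_avoider n c p \<longleftrightarrow> hits n c p \<noteq> {}"

definition hit_hugger :: "nat \<Rightarrow> nat \<Rightarrow> (nat \<Rightarrow> nat) \<Rightarrow> bool" where
  "hit_hugger n c p \<longleftrightarrow> card (hits n c p) = 2 \<and> 1 \<in> hits n c p \<and> n - c + 1 \<in> hits n c p"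

definition nN :: "nat \<Rightarrow> nat \<Rightarrow> bool \<Rightarrow> (nat \<Rightarrow> nat) set" where
  "nN n c ev = {p. p permutes {1..n} \<and> p n = n \<and> non_avoider n c p \<and> evenperm p = ev}"

definition nH :: "nat \<Rightarrow> nat \<Rightarrow> bool \<Rightarrow> (nat \<Rightarrow> nat) set" where
  "nH n c ev = {p. p permutes {1..n} \<and> p n = n \<and> hit_hugger n c p \<and> evenperm p = ev}"

end

theory Submission
  imports Defs "HOL-Number_Theory.Cong"
begin

fun rho :: "nat \<Rightarrow> nat \<Rightarrow> nat" where
  "rho 0 = id"
| "rho (Suc 0) = id"
| "rho (Suc (Suc k)) = rho (Suc k) \<circ> Transposition.transpose (Suc k) (Suc (Suc k))"

lemma rho_permutes: "rho k permutes {1..k}"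
proof (induction k rule: rho.induct)
  case 1 then show ?case by (simp only: rho.simps) (rule permutes_id)
next
  case 2 then show ?case by (simp only: rho.simps) (rule permutes_id)
next
  case (3 k)
  have a: "rho (Suc k) permutes {1..Suc (Suc k)}"
    by (rule permutes_subset[OF 3]) auto
  have b: "Transposition.transpose (Suc k) (Suc (Suc k)) permutes {1..Suc (Suc k)}"
    by (rule permutes_swap_id) auto
  show ?case unfolding rho.simps(3) by (rule permutes_compose[OF b a])
qed

lemma rho_formula:
  "rho k v = (if 1 \<le> v \<and> v < k then v + 1 else if v = k \<and> k \<ge> 1 then 1 else v)"
proof (induction k arbitrary: v rule: rho.induct)
  case 1 then show ?case by simp
next
  case 2 then show ?case by simp
next
  case (3 k)
  show ?case using 3[of v] 3[of "Suc k"] 3[of "Suc (Suc k)"]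
    by (auto simp: Transposition.transpose_def)
qed

lemma rho_even: "k \<ge> 1 \<Longrightarrow> evenperm (rho k) = odd k"
proof (induction k rule: rho.induct)
  case 1 then show ?case by simp
next
  case 2 then show ?case by simp
next
  case (3 k)
  have p1: "permutation (rho (Suc k))"
    using rho_permutes permutes_imp_permutation by blast
  have "evenperm (rho (Suc (Suc k))) = (evenperm (rho (Suc k)) = evenperm (Transposition.transpose (Suc k) (Suc (Suc k))))"
    unfolding rho.simps(3) by (rule evenperm_comp[OF p1 permutation_swap_id])
  then show ?case using 3 by (simp add: evenperm_swap del: rho.simps)
qed

lemma order_cong:
  assumes "\<forall>j<l. \<forall>k<l. u' j < u' k \<longleftrightarrow> u j < u k"
  shows "is_order_perm l u pi = is_order_perm l u' pi"
  using assms unfolding is_order_perm_def by auto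

lemma cyc_range: "c > 0 \<Longrightarrow> cyc_shift c k j \<in> {1..c}"
  unfolding cyc_shift_def by (simp add: Suc_leI)

lemma cyc_inj: "c > 0 \<Longrightarrow> inj_on (cyc_shift c k) {..<c}"
  unfolding cyc_shift_def inj_on_def
proof (intro ballI impI)
  fix j l assume "j \<in> {..<c}" "l \<in> {..<c}" "(j + k) mod c + 1 = (l + k) mod c + 1"
  then show "j = l" using cong_add_rcancel_nat[of j k l c] cong_less_modulus_unique_nat[of j l c]
    by (auto simp: cong_def)
qed

lemma cyc_next: "c > 0 \<Longrightarrow> cyc_shift c (Suc k mod c) j = cyc_shift c k j mod c + 1"
  unfolding cyc_shift_def by (simp add: mod_Suc_eq mod_add_right_eq)

lemma order_perm_inj_u:
  assumes "is_order_perm l u pi" "j < l" "i < l" "u j = u i"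
  shows "j = i"
proof -
  have "pi j = pi i" using assms unfolding is_order_perm_def by (metis not_less_iff_gr_or_eq)
  then show ?thesis using assms unfolding is_order_perm_def inj_on_def by auto
qed

lemma rot_lemma:
  assumes c: "c > 0" and k: "k < c" and op: "is_order_perm c u (cyc_shift c k)"
    and rng: "\<forall>j<c. u j \<in> {1..N}"
  shows "\<exists>k'<c. is_order_perm c (\<lambda>j. rho N (u j)) (cyc_shift c k')"
proof (cases "\<exists>j0<c. u j0 = N")
  case False
  have "\<forall>j<c. rho N (u j) = u j + 1" using False rng by (auto simp: rho_formula)
  then have "is_order_perm c u (cyc_shift c k) = is_order_perm c (\<lambda>j. rho N (u j)) (cyc_shift c k)"
    by (intro order_cong) auto
  then show ?thesis using op k by blast
next
  case True
  then obtain j0 where j0: "j0 < c" "u j0 = N" by blast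
  define pi where "pi = cyc_shift c k"
  define l1 where "l1 = c - 1 - k"
  have l1: "l1 < c" "pi l1 = c" using c k unfolding l1_def pi_def cyc_shift_def by auto
  have uN: "\<And>j. j < c \<Longrightarrow> (u j = N) = (j = j0)"
    using order_perm_inj_u[OF op] j0 by auto
  have "l1 = j0"
  proof (rule ccontr)
    assume "l1 \<noteq> j0"
    then have "u l1 < u j0" using uN[of l1] l1 rng j0 by fastforce
    then have "pi l1 < pi j0" using op l1 j0 unfolding is_order_perm_def pi_def by blast
    moreover have "pi j0 \<le> c" using cyc_range[OF c] unfolding pi_def by auto
    ultimately show False using l1 by simp
  qed
  have pic: "\<And>j. j < c \<Longrightarrow> (pi j = c) = (j = j0)"
    using cyc_inj[OF c, of k] l1 \<open>l1 = j0\<close> unfolding pi_def inj_on_def by auto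
  have pirng: "\<And>j. pi j \<in> {1..c}" using cyc_range[OF c] unfolding pi_def by auto
  have nxt: "\<And>j. j < c \<Longrightarrow> cyc_shift c (Suc k mod c) j = (if j = j0 then 1 else pi j + 1)"
  proof -
    fix j assume "j < c"
    show "cyc_shift c (Suc k mod c) j = (if j = j0 then 1 else pi j + 1)"
    proof (cases "j = j0")
      case True then show ?thesis using cyc_next[OF c] pic[OF \<open>j < c\<close>] unfolding pi_def by simp
    next
      case False
      then have "pi j < c" using pic[OF \<open>j < c\<close>] pirng[of j] by fastforce
      then show ?thesis using cyc_next[OF c] False unfolding pi_def by simp
    qed
  qed
  have cmp: "\<forall>j<c. \<forall>l<c. pi j < pi l \<longleftrightarrow> u j < u l" using op unfolding is_order_perm_def pi_def by blast
  have ru: "\<And>j. j < c \<Longrightarrow> rho N (u j) = (if j = j0 then 1 else u j + 1)"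
    using uN rng by (auto simp: rho_formula)
  have "is_order_perm c (\<lambda>j. rho N (u j)) (cyc_shift c (Suc k mod c))"
    unfolding is_order_perm_def
  proof (intro conjI allI impI)
    fix j assume "j < c" then show "cyc_shift c (Suc k mod c) j \<in> {1..c}" using cyc_range[OF c] by blast
  next
    show "inj_on (cyc_shift c (Suc k mod c)) {..<c}" by (rule cyc_inj[OF c])
  next
    fix j l assume jl: "j < c" "l < c"
    show "(cyc_shift c (Suc k mod c) j < cyc_shift c (Suc k mod c) l) = (rho N (u j) < rho N (u l))"
      using nxt[OF jl(1)] nxt[OF jl(2)] ru[OF jl(1)] ru[OF jl(2)] cmp jl pirng[of j] pirng[of l]
        rng j0
      by (auto simp: Suc_le_eq)
  qed
  moreover have "Suc k mod c < c" using c by simp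
  ultimately show ?thesis by blast
qed

definition PP :: "nat \<Rightarrow> (nat \<Rightarrow> nat) set" where
  "PP n = {p. p permutes {1..n} \<and> p n = n}"

lemma PP_val:
  assumes "p \<in> PP n" "x \<in> {1..n}" "x \<noteq> n"
  shows "p x \<in> {1..n-1}"
proof -
  have pp: "p permutes {1..n}" "p n = n" using assms unfolding PP_def by auto
  have "p x \<in> {1..n}" using permutes_in_image[OF pp(1)] assms(2) by simp
  moreover have "p x \<noteq> n"
  proof
    assume "p x = n"
    then have "p x = p n" using pp(2) by simp
    then show False using injD[OF permutes_inj[OF pp(1)]] assms(3) by blast
  qed
  ultimately show ?thesis by auto
qed

lemma hit_rho:
  assumes "p \<in> PP n" "hit_at n c p i" "i + c \<le> n" "c > 0"
  shows "hit_at n c (rho (n - 1) \<circ> p) i"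
proof -
  obtain k where k: "k < c" "is_order_perm c (\<lambda>j. p (i + j)) (cyc_shift c k)"
    using assms(2) unfolding hit_at_def by blast
  have i: "1 \<le> i" using assms(2) unfolding hit_at_def by blast
  have rng: "\<forall>j<c. p (i + j) \<in> {1..n-1}"
  proof (intro allI impI)
    fix j assume "j < c"
    then have "i + j \<in> {1..n}" "i + j \<noteq> n" using i assms(3) by auto
    then show "p (i + j) \<in> {1..n-1}" by (rule PP_val[OF assms(1)])
  qed
  obtain k' where k': "k' < c" "is_order_perm c (\<lambda>j. rho (n-1) (p (i + j))) (cyc_shift c k')"
    using rot_lemma[OF assms(4) k rng] by blast
  have h1: "1 \<le> i" "i + c \<le> n + 1" using assms(2) unfolding hit_at_def by auto
  have k2: "is_order_perm c (\<lambda>j. (rho (n - 1) \<circ> p) (i + j)) (cyc_shift c k')" using k'(2) by simp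
  show ?thesis unfolding hit_at_def by (intro conjI h1 exI[of _ k'] k'(1) k2)
qed

definition part :: "nat \<Rightarrow> nat" where
  "part v = (if odd v then v + 1 else v - 1)"

definition beta :: "(nat \<Rightarrow> nat) \<Rightarrow> nat \<Rightarrow> nat" where
  "beta p = Transposition.transpose (p 1) (part (p 1)) \<circ> p"

lemma part_part: "v \<ge> 1 \<Longrightarrow> part (part v) = v"
  unfolding part_def by auto

lemma part_rng:
  assumes "odd n" "v \<in> {1..n-1}"
  shows "part v \<in> {1..n-1} \<and> part v \<noteq> v"
proof (cases "odd v")
  case True
  have "v \<noteq> n - 1" using True assms(1) by presburger
  then show ?thesis using True assms(2) unfolding part_def by auto
next
  case False
  have "v \<noteq> 1" using False by auto
  then show ?thesis using False assms(2) unfolding part_def by auto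
qed

lemma beta_props:
  assumes "p \<in> PP n" "odd n" "n \<ge> 2"
  shows "beta p \<in> PP n" "beta (beta p) = p" "evenperm (beta p) = (\<not> evenperm p)"
    "beta p 1 = part (p 1)"
proof -
  have pp: "p permutes {1..n}" "p n = n" using assms unfolding PP_def by auto
  define a where "a = p 1"
  have a: "a \<in> {1..n-1}" using PP_val[OF assms(1)] assms(3) unfolding a_def by auto
  have b: "part a \<in> {1..n-1}" "part a \<noteq> a" using part_rng[OF assms(2) a] by auto
  have tp: "Transposition.transpose a (part a) permutes {1..n}"
    using a b by (intro permutes_swap_id) auto
  have "beta p permutes {1..n}" unfolding beta_def a_def[symmetric] by (rule permutes_compose[OF pp(1) tp])
  moreover have "beta p n = n" unfolding beta_def a_def[symmetric] using pp a b
    by (auto simp: Transposition.transpose_def)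
  ultimately show "beta p \<in> PP n" unfolding PP_def by auto
  show b1: "beta p 1 = part (p 1)" unfolding beta_def by (simp add: Transposition.transpose_def)
  have pa: "part (part a) = a" using a part_part by auto
  have "beta (beta p) = Transposition.transpose (part a) (part (part a)) \<circ> beta p"
    unfolding beta_def[of "beta p"] b1 a_def by (rule refl)
  also have "\<dots> = Transposition.transpose a (part a) \<circ> (Transposition.transpose a (part a) \<circ> p)"
    unfolding pa beta_def a_def[symmetric] transpose_commute[of "part a" a] by (rule refl)
  also have "\<dots> = p" by (simp only: comp_assoc[symmetric] transpose_comp_involutory id_comp)
  finally show "beta (beta p) = p" .
  have perm: "permutation p" using pp(1) permutes_imp_permutation by blast
  have e1: "evenperm (Transposition.transpose a (part a) \<circ> p) = (evenperm (Transposition.transpose a (part a)) = evenperm p)"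
    by (rule evenperm_comp[OF permutation_swap_id perm])
  have e2: "evenperm (Transposition.transpose a (part a)) = False"
    using b(2) evenperm_swap[of a "part a"] by auto
  show "evenperm (beta p) = (\<not> evenperm p)" unfolding beta_def a_def[symmetric] e1 e2 by simp
qed

lemma hit_beta:
  assumes "p \<in> PP n" "odd n" "n \<ge> 2" "hit_at n c p i" "i \<ge> 2"
  shows "hit_at n c (beta p) i"
proof -
  have pp: "p permutes {1..n}" using assms unfolding PP_def by auto
  define a where "a = p 1"
  have a: "a \<in> {1..n-1}" using PP_val[OF assms(1)] assms(3) unfolding a_def by auto
  have b: "part a = a + 1 \<or> part a + 1 = a" unfolding part_def using a by auto
  have na: "\<And>j. p (i + j) \<noteq> a"
  proof
    fix j assume "p (i + j) = a"
    then have "i + j = 1" using injD[OF permutes_inj[OF pp]] unfolding a_def by blast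
    then show False using assms(5) by simp
  qed
  have "\<forall>j<c. \<forall>l<c. beta p (i + j) < beta p (i + l) \<longleftrightarrow> p (i + j) < p (i + l)"
  proof (intro allI impI)
    fix j l
    show "beta p (i + j) < beta p (i + l) \<longleftrightarrow> p (i + j) < p (i + l)"
      unfolding beta_def a_def[symmetric] using na[of j] na[of l] b
      by (cases "p (i + j) = part a"; cases "p (i + l) = part a") (auto simp: Transposition.transpose_def)
  qed
  then have eq: "\<And>pi. is_order_perm c (\<lambda>j. p (i + j)) pi = is_order_perm c (\<lambda>j. beta p (i + j)) pi"
    by (rule order_cong)
  obtain k where k: "k < c" "is_order_perm c (\<lambda>j. p (i + j)) (cyc_shift c k)"
    using assms(4) unfolding hit_at_def by blast
  have k2: "is_order_perm c (\<lambda>j. beta p (i + j)) (cyc_shift c k)" by (rule iffD1[OF eq k(2)])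
  have h1: "1 \<le> i" "i + c \<le> n + 1" using assms(4) unfolding hit_at_def by auto
  show ?thesis unfolding hit_at_def by (intro conjI h1 exI[of _ k] k(1) k2)
qed

definition N1 :: "nat \<Rightarrow> nat \<Rightarrow> bool \<Rightarrow> (nat \<Rightarrow> nat) set" where
  "N1 n c ev = {p \<in> PP n. (\<exists>i. hit_at n c p i \<and> i + c \<le> n) \<and> evenperm p = ev}"

definition MM :: "nat \<Rightarrow> nat \<Rightarrow> bool \<Rightarrow> (nat \<Rightarrow> nat) set" where
  "MM n c ev = {p \<in> PP n. hit_at n c p (n - c + 1) \<and> (\<forall>i. hit_at n c p i \<longrightarrow> i = n - c + 1) \<and> evenperm p = ev}"

definition G1 :: "nat \<Rightarrow> nat \<Rightarrow> bool \<Rightarrow> (nat \<Rightarrow> nat) set" where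
  "G1 n c ev = {p \<in> PP n. hit_at n c p (n - c + 1) \<and> (\<forall>i. hit_at n c p i \<longrightarrow> i = 1 \<or> i = n - c + 1) \<and> evenperm p = ev}"

lemma finite_PP: "finite (PP n)"
proof -
  have "PP n \<subseteq> {p. p permutes {1..n}}" unfolding PP_def by auto
  then show ?thesis using finite_permutations[of "{1..n}"] finite_subset by blast
qed

lemma hit_bound: "hit_at n c p i \<Longrightarrow> 1 \<le> i \<and> i + c \<le> n + 1"
  unfolding hit_at_def by blast

lemma N1_map:
  assumes "odd n" "n \<ge> 2" "c > 0" "p \<in> N1 n c ev"
  shows "rho (n - 1) \<circ> p \<in> N1 n c (\<not> ev)"
proof -
  have p: "p \<in> PP n" "evenperm p = ev" and h: "\<exists>i. hit_at n c p i \<and> i + c \<le> n"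
    using assms(4) unfolding N1_def by auto
  have pp: "p permutes {1..n}" "p n = n" using p(1) unfolding PP_def by auto
  have r: "rho (n - 1) permutes {1..n}" by (rule permutes_subset[OF rho_permutes]) auto
  have "rho (n - 1) \<circ> p permutes {1..n}" by (rule permutes_compose[OF pp(1) r])
  have nn: "n \<noteq> n - 1" "\<not> n < n - 1" using assms(2) by auto
  have "(rho (n - 1) \<circ> p) n = n" using pp(2) nn by (simp add: rho_formula)
  moreover note \<open>rho (n - 1) \<circ> p permutes {1..n}\<close>
  ultimately have inP: "rho (n - 1) \<circ> p \<in> PP n" unfolding PP_def by auto
  have ev: "evenperm (rho (n - 1)) = False" using rho_even[of "n - 1"] assms(1,2) by simp
  have perm: "permutation p" "permutation (rho (n - 1))"
    using pp(1) rho_permutes permutes_imp_permutation by blast+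
  have "evenperm (rho (n - 1) \<circ> p) = (\<not> ev)" using evenperm_comp[OF perm(2) perm(1)] ev p(2) by simp
  moreover from h obtain i where "hit_at n c p i" "i + c \<le> n" by blast
  then have "hit_at n c (rho (n - 1) \<circ> p) i" "i + c \<le> n" using hit_rho[OF p(1) _ _ assms(3)] by auto
  ultimately show ?thesis using inP unfolding N1_def by blast
qed

lemma card_N1:
  assumes "odd n" "n \<ge> 2" "c > 0"
  shows "card (N1 n c True) = card (N1 n c False)"
proof -
  have inj: "inj_on (\<lambda>p. rho (n - 1) \<circ> p) A" for A
  proof (rule inj_onI)
    fix p q assume e: "rho (n - 1) \<circ> p = rho (n - 1) \<circ> q"
    show "p = q"
    proof
      fix x
      have "rho (n - 1) (p x) = rho (n - 1) (q x)" using fun_cong[OF e, of x] by simp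
      then show "p x = q x" by (rule injD[OF permutes_inj[OF rho_permutes]])
    qed
  qed
  have fin: "finite (N1 n c ev)" for ev using finite_PP unfolding N1_def by auto
  have "card (N1 n c ev) \<le> card (N1 n c (\<not> ev))" for ev
    by (rule card_inj_on_le[OF inj _ fin]) (rule image_subsetI, rule N1_map[OF assms])
  from this[of True] this[of False] show ?thesis by simp
qed

lemma G1_map:
  assumes "odd n" "n > c" "c > 0" "p \<in> G1 n c ev"
  shows "beta p \<in> G1 n c (\<not> ev)"
proof -
  have n2: "n \<ge> 2" using assms by auto
  have p: "p \<in> PP n" "evenperm p = ev" "hit_at n c p (n - c + 1)"
    and h: "\<forall>i. hit_at n c p i \<longrightarrow> i = 1 \<or> i = n - c + 1"
    using assms(4) unfolding G1_def by auto
  note bp = beta_props[OF p(1) assms(1) n2]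
  have m2: "n - c + 1 \<ge> 2" using assms by auto
  have "hit_at n c (beta p) (n - c + 1)" by (rule hit_beta[OF p(1) assms(1) n2 p(3) m2])
  moreover have "\<forall>i. hit_at n c (beta p) i \<longrightarrow> i = 1 \<or> i = n - c + 1"
  proof (intro allI impI)
    fix i assume hi: "hit_at n c (beta p) i"
    show "i = 1 \<or> i = n - c + 1"
    proof (cases "i \<ge> 2")
      case True
      have "hit_at n c (beta (beta p)) i" by (rule hit_beta[OF bp(1) assms(1) n2 hi True])
      then have "hit_at n c p i" unfolding bp(2) .
      then show ?thesis using h by blast
    next
      case False then show ?thesis using hit_bound[OF hi] by auto
    qed
  qed
  moreover have "evenperm (beta p) = (\<not> ev)" using bp(3) p(2) by simp
  ultimately show ?thesis using bp(1) unfolding G1_def by blast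
qed

lemma card_G1:
  assumes "odd n" "n > c" "c > 0"
  shows "card (G1 n c True) = card (G1 n c False)"
proof -
  have n2: "n \<ge> 2" using assms by auto
  have inj: "inj_on beta (G1 n c ev)" for ev
  proof (rule inj_onI)
    fix p q assume pq: "p \<in> G1 n c ev" "q \<in> G1 n c ev" "beta p = beta q"
    have "p \<in> PP n" "q \<in> PP n" using pq(1,2) unfolding G1_def by auto
    then have "beta (beta p) = p" "beta (beta q) = q" using beta_props(2)[OF _ assms(1) n2] by blast+
    then show "p = q" using pq(3) by metis
  qed
  have fin: "finite (G1 n c ev)" for ev using finite_PP unfolding G1_def by auto
  have "card (G1 n c ev) \<le> card (G1 n c (\<not> ev))" for ev
    by (rule card_inj_on_le[OF inj _ fin]) (rule image_subsetI, rule G1_map[OF assms])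
  from this[of True] this[of False] show ?thesis by simp
qed

lemma N_split:
  assumes "n > c"
  shows "nN n c ev = N1 n c ev \<union> MM n c ev" "N1 n c ev \<inter> MM n c ev = {}"
proof -
  show "nN n c ev = N1 n c ev \<union> MM n c ev"
  proof (rule set_eqI, rule iffI)
    fix p assume "p \<in> nN n c ev"
    then have p: "p \<in> PP n" "evenperm p = ev" and h: "\<exists>i. hit_at n c p i"
      unfolding nN_def PP_def non_avoider_def hits_def by auto
    show "p \<in> N1 n c ev \<union> MM n c ev"
    proof (cases "\<exists>i. hit_at n c p i \<and> i + c \<le> n")
      case True then show ?thesis using p unfolding N1_def by auto
    next
      case False
      have all: "\<forall>i. hit_at n c p i \<longrightarrow> i = n - c + 1"
      proof (intro allI impI)
        fix i assume hi: "hit_at n c p i"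
        then have "i + c \<le> n + 1" using hit_bound by blast
        moreover have "\<not> i + c \<le> n" using False hi by blast
        ultimately show "i = n - c + 1" using assms by linarith
      qed
      from h obtain i where hi: "hit_at n c p i" by blast
      have "i = n - c + 1" using all hi by blast
      then have "hit_at n c p (n - c + 1)" using hi by simp
      then have "p \<in> MM n c ev" using p all unfolding MM_def by blast
      then show ?thesis by blast
    qed
  next
    fix p assume "p \<in> N1 n c ev \<union> MM n c ev"
    then show "p \<in> nN n c ev" unfolding nN_def PP_def non_avoider_def hits_def N1_def MM_def by auto
  qed
  show "N1 n c ev \<inter> MM n c ev = {}"
  proof (rule ccontr)
    assume "N1 n c ev \<inter> MM n c ev \<noteq> {}"
    then obtain p where p: "p \<in> N1 n c ev" "p \<in> MM n c ev" by blast
    then obtain i where i: "hit_at n c p i" "i + c \<le> n" unfolding N1_def by blast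
    have "\<forall>i. hit_at n c p i \<longrightarrow> i = n - c + 1" using p(2) unfolding MM_def by blast
    then have "i = n - c + 1" using i(1) by blast
    then show False using i(2) assms by linarith
  qed
qed

lemma G_split:
  assumes "n > c"
  shows "G1 n c ev = MM n c ev \<union> nH n c ev" "MM n c ev \<inter> nH n c ev = {}"
proof -
  have ne: "(1::nat) \<noteq> n - c + 1" using assms by auto
  have H_iff: "hit_hugger n c p \<longleftrightarrow> hits n c p = {1, n - c + 1}" for p
  proof
    assume a: "hit_hugger n c p"
    have c2: "card (hits n c p) = 2" using a unfolding hit_hugger_def by blast
    have fin: "finite (hits n c p)"
    proof (rule ccontr)
      assume "infinite (hits n c p)"
      then have "card (hits n c p) = 0" by (rule card.infinite)
      then show False using c2 by simp
    qed
    have sub: "{1, n - c + 1} \<subseteq> hits n c p" using a unfolding hit_hugger_def by auto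
    have "card {1, n - c + 1} = card (hits n c p)" using a ne unfolding hit_hugger_def by auto
    then show "hits n c p = {1, n - c + 1}" using card_subset_eq[OF fin sub] by simp
  next
    assume "hits n c p = {1, n - c + 1}"
    then show "hit_hugger n c p" unfolding hit_hugger_def using ne by auto
  qed
  show "G1 n c ev = MM n c ev \<union> nH n c ev"
  proof (rule set_eqI, rule iffI)
    fix p assume "p \<in> G1 n c ev"
    then have p: "p \<in> PP n" "evenperm p = ev" "hit_at n c p (n - c + 1)"
      and h: "\<forall>i. hit_at n c p i \<longrightarrow> i = 1 \<or> i = n - c + 1" unfolding G1_def by auto
    show "p \<in> MM n c ev \<union> nH n c ev"
    proof (cases "hit_at n c p 1")
      case True
      then have "hits n c p = {1, n - c + 1}" using h p(3) unfolding hits_def by auto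
      then show ?thesis using p H_iff unfolding nH_def PP_def by auto
    next
      case False
      then show ?thesis using p h unfolding MM_def by auto
    qed
  next
    fix p assume "p \<in> MM n c ev \<union> nH n c ev"
    then show "p \<in> G1 n c ev"
    proof
      assume "p \<in> MM n c ev" then show ?thesis unfolding MM_def G1_def by auto
    next
      assume "p \<in> nH n c ev"
      then have "p \<in> PP n" "evenperm p = ev" "hits n c p = {1, n - c + 1}"
        using H_iff unfolding nH_def PP_def by auto
      then show ?thesis unfolding G1_def hits_def by auto
    qed
  qed
  show "MM n c ev \<inter> nH n c ev = {}"
  proof (rule ccontr)
    assume "MM n c ev \<inter> nH n c ev \<noteq> {}"
    then obtain p where "p \<in> MM n c ev" "p \<in> nH n c ev" by blast
    then have "hits n c p = {1, n - c + 1}" "\<forall>i. hit_at n c p i \<longrightarrow> i = n - c + 1"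
      using H_iff unfolding nH_def MM_def by auto
    then show False using ne unfolding hits_def by auto
  qed
qed

theorem lemma2p15:
  fixes c n :: nat
  assumes "odd c" and "odd n" and "c > 0" and "n > c" and "2 * c > n"
  shows "int (card (nH n c True)) - int (card (nH n c False))
       = int (card (nN n c False)) - int (card (nN n c True))"
proof -
  have n2: "n \<ge> 2" using assms by auto
  have finN1: "finite (N1 n c ev)" for ev using finite_PP unfolding N1_def by auto
  have finM: "finite (MM n c ev)" for ev using finite_PP unfolding MM_def by auto
  have finH: "finite (nH n c ev)" for ev
  proof -
    have "nH n c ev \<subseteq> PP n" unfolding nH_def PP_def by blast
    then show ?thesis using finite_PP finite_subset by blast
  qed
  have cN: "card (nN n c ev) = card (N1 n c ev) + card (MM n c ev)" for ev
    using N_split[OF assms(4), of ev] card_Un_disjoint[OF finN1 finM] by simp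
  have cG: "card (G1 n c ev) = card (MM n c ev) + card (nH n c ev)" for ev
    using G_split[OF assms(4), of ev] card_Un_disjoint[OF finM finH] by simp
  have e1: "card (N1 n c True) = card (N1 n c False)" by (rule card_N1[OF assms(2) n2 assms(3)])
  have e2: "card (G1 n c True) = card (G1 n c False)" by (rule card_G1[OF assms(2) assms(4) assms(3)])
  show ?thesis using cN[of True] cN[of False] cG[of True] cG[of False] e1 e2 by simp
qed

end
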